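(* Let $S$ be a $\Gamma$-hemiring and let $\mu$ be a fuzzy h-ideal of $S$. Let $\beta\in(0,1]$ and $\alpha\in[0,1-\sup\{\mu(y):y\in S\}]$, and define $\mu_{\beta,\alpha}(y)=\beta\mu(y)+\alpha$ for $y\in S$. Then for every $x\in S$, $\langle x,\mu_{\beta,\alpha}\rangle$ is a fuzzy h-ideal of $S$.
   Context: A $\Gamma$-hemiring is a pair of additive commutative semigroups with zero $S$ and $\Gamma$ with a map $S\times\Gamma\times S\to S$, $(a,\alpha,b)\mapsto a\alpha b$, such that for all $a,b,c\in S$, $\alpha,\beta\in\Gamma$: $(a+b)\alpha c=a\alpha c+b\alpha c$; $a\alpha(b+c)=a\alpha b+a\alpha c$; $a(\alpha+\beta)b=a\alpha b+a\beta b$; $a\alpha(b\beta c)=(a\alpha b)\beta c$; $0\alpha a=0=a\alpha0$; $a0b=0=b0a$. A fuzzy h-ideal of $S$ is a map $\mu:S\to[0,1]$, not identically $0$, such that for all $x,y,a,b,z\in S$, $\gamma\in\Gamma$: $\mu(x+y)\ge\min\{\mu(x),\mu(y)\}$; $\mu(x\gamma y)\ge\mu(x)$ and $\mu(x\gamma y)\ge\mu(y)$; $x+a+z=b+z$ implies $\mu(x)\ge\min\{\mu(a),\mu(b)\}$. The extension of a fuzzy subset $\mu$ by $x$ is $\langle x,\mu\rangle(y)=\inf_{s\in S,\ \alpha,\gamma\in\Gamma}\mu(x\alpha s\gamma y)$ (here $\alpha,\gamma$ are bound variables ranging over $\Gamma$, unrelated to the real number $\alpha$ above). *)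

theory Defs
  imports "HOL-Analysis.Analysis"
begin

text \<open>A Gamma-hemiring: S and Gamma are commutative monoids (additive commutative
  semigroups with zero), modelled by types of class comm_monoid_add; the ternary
  operation is m a g b = a g b.\<close>
definition gamma_hemiring :: "('s::comm_monoid_add \<Rightarrow> 'g::comm_monoid_add \<Rightarrow> 's \<Rightarrow> 's) \<Rightarrow> bool" where
  "gamma_hemiring m \<longleftrightarrow>
     (\<forall>a b c g. m (a + b) g c = m a g c + m b g c) \<and>
     (\<forall>a b c g. m a g (b + c) = m a g b + m a g c) \<and>
     (\<forall>a b g h. m a (g + h) b = m a g b + m a h b) \<and>
     (\<forall>a b c g h. m a g (m b h c) = m (m a g b) h c) \<and>
     (\<forall>a g. m 0 g a = 0 \<and> m a g 0 = 0) \<and>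
     (\<forall>a b. m a 0 b = 0 \<and> m b 0 a = 0)"

definition fuzzy_h_ideal :: "('s::comm_monoid_add \<Rightarrow> 'g::comm_monoid_add \<Rightarrow> 's \<Rightarrow> 's) \<Rightarrow> ('s \<Rightarrow> real) \<Rightarrow> bool" where
  "fuzzy_h_ideal m \<mu> \<longleftrightarrow>
     (\<forall>x. 0 \<le> \<mu> x \<and> \<mu> x \<le> 1) \<and>
     (\<exists>x. \<mu> x \<noteq> 0) \<and>
     (\<forall>x y. \<mu> (x + y) \<ge> min (\<mu> x) (\<mu> y)) \<and>
     (\<forall>x y g. \<mu> (m x g y) \<ge> \<mu> x \<and> \<mu> (m x g y) \<ge> \<mu> y) \<and>
     (\<forall>x a b z. x + a + z = b + z \<longrightarrow> \<mu> x \<ge> min (\<mu> a) (\<mu> b))"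

text \<open>Extension of \<mu> by x: <x,\<mu>>(y) = inf over s, alpha, gamma of \<mu>(x alpha s gamma y).\<close>
definition extension :: "('s \<Rightarrow> 'g \<Rightarrow> 's \<Rightarrow> 's) \<Rightarrow> 's \<Rightarrow> ('s \<Rightarrow> real) \<Rightarrow> 's \<Rightarrow> real" where
  "extension m x \<mu> y = (INF p\<in>(UNIV :: ('s \<times> 'g \<times> 'g) set).
      \<mu> (m (m x (fst (snd p)) (fst p)) (snd (snd p)) y))"

end

theory Submission
  imports Defs
begin

theorem proposition3p13:
  fixes m :: "'s::comm_monoid_add \<Rightarrow> 'g::comm_monoid_add \<Rightarrow> 's \<Rightarrow> 's"
    and \<mu> :: "'s \<Rightarrow> real" and \<beta> \<alpha> :: real
  assumes "gamma_hemiring m"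
    and "fuzzy_h_ideal m \<mu>"
    and "0 < \<beta>" "\<beta> \<le> 1"
    and "0 \<le> \<alpha>" "\<alpha> \<le> 1 - (SUP y. \<mu> y)"
  shows "\<forall>x. fuzzy_h_ideal m (extension m x (\<lambda>y. \<beta> * \<mu> y + \<alpha>))"
proof
  fix x
  define \<nu> where "\<nu> = (\<lambda>y. \<beta> * \<mu> y + \<alpha>)"
  define E where "E = extension m x \<nu>"
  note H = assms(1)[unfolded gamma_hemiring_def]
  note F = assms(2)[unfolded fuzzy_h_ideal_def]
  have dl: "\<And>a b c g. m (a + b) g c = m a g c + m b g c"
    and dr: "\<And>a b c g. m a g (b + c) = m a g b + m a g c"
    and asc: "\<And>a b c g h. m a g (m b h c) = m (m a g b) h c"
    and z0: "\<And>a g. m a g 0 = 0" using H by auto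
  have Fsum: "\<And>x y. \<mu> (x + y) \<ge> min (\<mu> x) (\<mu> y)"
    using F by blast
  have Fl: "\<And>x y g. \<mu> (m x g y) \<ge> \<mu> x"
    using F by blast
  have Fh: "\<And>x a b z. x + a + z = b + z \<Longrightarrow> \<mu> x \<ge> min (\<mu> a) (\<mu> b)"
  proof -
    fix x :: 's and a b z assume "x + a + z = b + z"
    thus "\<mu> x \<ge> min (\<mu> a) (\<mu> b)" using conjunct2[OF conjunct2[OF conjunct2[OF conjunct2[OF F]]]] by blast
  qed
  have mu01: "\<And>y. 0 \<le> \<mu> y \<and> \<mu> y \<le> 1" using F by blast
  have bdd: "bdd_above (range \<mu>)" using mu01 by (auto intro: bdd_aboveI[where M=1])
  have musup: "\<And>y. \<mu> y \<le> 1 - \<alpha>" 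
  proof -
    fix y show "\<mu> y \<le> 1 - \<alpha>" using cSUP_upper[OF UNIV_I bdd, of y] assms(6) by simp
  qed
  have nulo: "\<And>y. \<alpha> \<le> \<nu> y" unfolding \<nu>_def using mu01 assms(3) by (simp add: order_less_imp_le)
  have nuhi: "\<And>y. \<nu> y \<le> 1"
  proof -
    fix y
    have "\<beta> * \<mu> y \<le> \<beta> * (1 - \<alpha>)" using musup assms(3) by simp
    also have "\<dots> \<le> 1 - \<alpha>" using assms(3,4,5) musup[of 0] mu01[of 0]
      by (intro mult_left_le_one_le) linarith+
    finally show "\<nu> y \<le> 1" unfolding \<nu>_def by simp
  qed
  have numin: "\<And>u a b. \<mu> u \<ge> min (\<mu> a) (\<mu> b) \<Longrightarrow> \<nu> u \<ge> min (\<nu> a) (\<nu> b)"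
    unfolding \<nu>_def using assms(3) by (auto simp: min_def)
  have numono: "\<And>u a. \<mu> u \<ge> \<mu> a \<Longrightarrow> \<nu> u \<ge> \<nu> a"
    unfolding \<nu>_def using assms(3) by auto
  have Edef: "\<And>y. E y = (INF p\<in>UNIV. \<nu> (m (m x (fst (snd p)) (fst p)) (snd (snd p)) y))"
    unfolding E_def extension_def by simp
  have bddb: "\<And>y. bdd_below (range (\<lambda>p. \<nu> (m (m x (fst (snd p)) (fst p)) (snd (snd p)) y)))"
    using nulo by (auto intro: bdd_belowI[where m=\<alpha>])
  have Elow: "\<And>y s a g. E y \<le> \<nu> (m (m x a s) g y)"
  proof -
    fix y s a g
    show "E y \<le> \<nu> (m (m x a s) g y)"
      unfolding Edef using cINF_lower[OF bddb, of "(s,a,g)" y] by simp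
  qed
  have Egr: "\<And>y c. (\<And>s a g. c \<le> \<nu> (m (m x a s) g y)) \<Longrightarrow> c \<le> E y"
    unfolding Edef by (rule cINF_greatest) auto
  show "fuzzy_h_ideal m (extension m x (\<lambda>y. \<beta> * \<mu> y + \<alpha>))"
    unfolding E_def[unfolded \<nu>_def, symmetric] fuzzy_h_ideal_def
  proof (intro conjI allI impI)
    fix y
    show "0 \<le> E y" using Egr[of 0 y] nulo assms(5) by (meson order_trans)
    show "E y \<le> 1" using Elow[of y 0 0 0] nuhi by (meson order_trans)
  next
    obtain z where z: "\<mu> z \<noteq> 0" using F by blast
    have "\<mu> 0 \<ge> \<mu> z" using Fl[of z 0 0] z0 by simp
    hence pos: "\<mu> 0 > 0" using z mu01[of z] by linarith
    have "\<nu> 0 \<le> E 0" by (rule Egr) (simp add: z0)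
    moreover have "\<nu> 0 > 0" unfolding \<nu>_def using mult_pos_pos[OF assms(3) pos] assms(5) by linarith
    ultimately have "E 0 \<noteq> 0" by linarith
    thus "\<exists>y. E y \<noteq> 0" by blast
  next
    fix y z
    show "min (E y) (E z) \<le> E (y + z)"
    proof (rule Egr)
      fix s a g
      have "\<nu> (m (m x a s) g (y + z)) \<ge> min (\<nu> (m (m x a s) g y)) (\<nu> (m (m x a s) g z))"
        unfolding dr by (rule numin[OF Fsum])
      moreover have "min (E y) (E z) \<le> min (\<nu> (m (m x a s) g y)) (\<nu> (m (m x a s) g z))"
        using Elow by (meson min.mono)
      ultimately show "min (E y) (E z) \<le> \<nu> (m (m x a s) g (y + z))" by linarith
    qed
  next
    fix y z g
    show "E y \<le> E (m y g z)"
    proof (rule Egr)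
      fix s a h
      have eq: "m (m x a s) h (m y g z) = m (m (m x a s) h y) g z" by (rule asc)
      have "\<nu> (m (m (m x a s) h y) g z) \<ge> \<nu> (m (m x a s) h y)" using numono Fl by blast
      thus "E y \<le> \<nu> (m (m x a s) h (m y g z))" unfolding eq using Elow[where y=y and s=s and a=a and g=h] by linarith
    qed
    show "E z \<le> E (m y g z)"
    proof (rule Egr)
      fix s a h
      have eq: "m (m x a s) h (m y g z) = m (m x a (m s h y)) g z" by (simp only: asc)
      show "E z \<le> \<nu> (m (m x a s) h (m y g z))" unfolding eq by (rule Elow)
    qed
  next
    fix y a b z :: 's
    assume e: "y + a + z = b + z"
    show "min (E a) (E b) \<le> E y"
    proof (rule Egr)
      fix s a' g
      let ?w = "m x a' s"
      have "m ?w g y + m ?w g a + m ?w g z = m ?w g (y + a + z)" by (simp add: dr)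
      also have "\<dots> = m ?w g (b + z)" using e by simp
      also have "\<dots> = m ?w g b + m ?w g z" by (simp add: dr)
      finally have "m ?w g y + m ?w g a + m ?w g z = m ?w g b + m ?w g z" .
      hence "\<mu> (m ?w g y) \<ge> min (\<mu> (m ?w g a)) (\<mu> (m ?w g b))" by (rule Fh)
      hence "\<nu> (m ?w g y) \<ge> min (\<nu> (m ?w g a)) (\<nu> (m ?w g b))" by (rule numin)
      moreover have "min (E a) (E b) \<le> min (\<nu> (m ?w g a)) (\<nu> (m ?w g b))"
        using Elow by (meson min.mono)
      ultimately show "min (E a) (E b) \<le> \<nu> (m ?w g y)" by linarith
    qed
  qed
qed

end
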